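(* Let $\ell\ge2$ be an integer and let $F$ be one of: $2P_\ell$ with $\ell$ even; $P_{\ell+1}\cup P_\ell$; $P_{\ell+2}\cup P_\ell$ with $\ell$ odd; $2P_\ell\cup P_2$ with $\ell$ odd (so that $\delta_F=\ell-1$). Then for every integer $t\ge1$ and every integer $1\le s\le \delta_F+1$, $$\mathcal{N}_s\big(G_F(t(\ell-1)+1)\big)\ \ge\ \mathcal{N}_s\big(K_1+tK_{\ell-1}\big).$$
   Context: $P_m$, $K_m$, $E_m$: path, complete graph, edgeless graph on $m$ vertices; $G\cup H$ disjoint union, $tG$ is $t$ disjoint copies, $G+H$ the join. For a linear forest $F=P_{\ell_1}\cup\cdots\cup P_{\ell_k}$, $\delta_F=\sum_i\lfloor\ell_i/2\rfloor-1$, $G_F(n)=K_{\delta_F}+E_{n-\delta_F}$ if some $\ell_i$ is even and $G_F(n)=K_{\delta_F}+(E_{n-\delta_F-2}\cup K_2)$ if all $\ell_i$ are odd. $\mathcal{N}_s(G)$ is the number of copies of $K_s$ in $G$. *)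

theory Defs
  imports Main
begin

definition num_cliques :: "nat set \<Rightarrow> (nat \<Rightarrow> nat \<Rightarrow> bool) \<Rightarrow> nat \<Rightarrow> nat" where
  "num_cliques V E s = card {S. S \<subseteq> V \<and> card S = s \<and> (\<forall>x\<in>S. \<forall>y\<in>S. x \<noteq> y \<longrightarrow> E x y)}"

(* A linear forest F = P_{l_1} \<union> ... \<union> P_{l_k} is given by the list [l_1,...,l_k]. *)
definition delta_F :: "nat list \<Rightarrow> nat" where
  "delta_F F = (\<Sum>l\<leftarrow>F. l div 2) - 1"

(* G_F(n) on vertex set {0..<n}: vertices 0..<delta_F form the clique K_{delta_F},
   joined to everything; if all l_i are odd, additionally the edge {delta_F, delta_F+1}
   (the K_2 inside the independent part). *)
definition GF_edge :: "nat list \<Rightarrow> nat \<Rightarrow> nat \<Rightarrow> bool" where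
  "GF_edge F x y = (x \<noteq> y \<and>
     (x < delta_F F \<or> y < delta_F F \<or>
      ((\<forall>l\<in>set F. odd l) \<and> {x, y} = {delta_F F, delta_F F + 1})))"

definition GF_vertices :: "nat \<Rightarrow> nat set" where
  "GF_vertices n = {0..<n}"

(* K_1 + t K_{m}: vertex set {0..<t*m+1}; vertex 0 is the K_1, vertex i \<ge> 1 lies in
   copy number (i-1) div m of K_m. *)
definition K1_join_tK_edge :: "nat \<Rightarrow> nat \<Rightarrow> nat \<Rightarrow> bool" where
  "K1_join_tK_edge m x y = (x \<noteq> y \<and> (x = 0 \<or> y = 0 \<or> (x - 1) div m = (y - 1) div m))"

end

theory Submission
  imports Defs
begin

lemma nc_one: "finite V \<Longrightarrow> num_cliques V E 1 = card V"
proof -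
  assume f: "finite V"
  have "{S. S \<subseteq> V \<and> card S = 1 \<and> (\<forall>x\<in>S. \<forall>y\<in>S. x \<noteq> y \<longrightarrow> E x y)} = {S. S \<subseteq> V \<and> card S = 1}"
    by (auto simp: card_Suc_eq)
  then show ?thesis using f by (simp add: num_cliques_def n_subsets)
qed

lemma G_lower:
  assumes E: "\<And>x y. x \<noteq> y \<Longrightarrow> x < m \<or> y < m \<Longrightarrow> E x y" and mn: "m \<le> n" and s: "s \<ge> 1"
  shows "(m choose s) + (n - m) * (m choose (s - 1)) \<le> num_cliques {0..<n} E s"
proof -
  define C where "C = {S. S \<subseteq> {0..<n} \<and> card S = s \<and> (\<forall>x\<in>S. \<forall>y\<in>S. x \<noteq> y \<longrightarrow> E x y)}"
  define F1 where "F1 = {S. S \<subseteq> {0..<m} \<and> card S = s}"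
  define P where "P = {T. T \<subseteq> {0..<m} \<and> card T = s - 1}"
  define F2 where "F2 = (\<lambda>(b,T). insert b T) ` ({m..<n} \<times> P)"
  have finC: "finite C" unfolding C_def
    by (rule finite_subset[of _ "Pow {0..<n}"]) auto
  have F1C: "F1 \<subseteq> C" unfolding F1_def C_def using mn E by auto
  have F2C: "F2 \<subseteq> C"
  proof
    fix S assume "S \<in> F2"
    then obtain b T where S: "S = insert b T" and b: "b \<in> {m..<n}" and T: "T \<in> P"
      unfolding F2_def by auto
    have fT: "finite T" using T unfolding P_def by (auto intro: finite_subset)
    have "b \<notin> T" using T b unfolding P_def by auto
    hence "card S = s" using S fT T s unfolding P_def by auto
    moreover have "S \<subseteq> {0..<n}" using S b T mn unfolding P_def by auto
    moreover have "\<forall>x\<in>S. \<forall>y\<in>S. x \<noteq> y \<longrightarrow> E x y"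
    proof (intro ballI impI)
      fix x y assume "x \<in> S" "y \<in> S" "x \<noteq> y"
      hence "x < m \<or> y < m" using S T unfolding P_def by auto
      thus "E x y" using E \<open>x \<noteq> y\<close> by auto
    qed
    ultimately show "S \<in> C" unfolding C_def by auto
  qed
  have disj: "F1 \<inter> F2 = {}" unfolding F1_def F2_def by auto
  have inj: "inj_on (\<lambda>(b,T). insert b T) ({m..<n} \<times> P)"
  proof (rule inj_onI)
    fix p q assume hp: "p \<in> {m..<n} \<times> P" and hq: "q \<in> {m..<n} \<times> P"
      and eq0: "(\<lambda>(b,T). insert b T) p = (\<lambda>(b,T). insert b T) q"
    obtain b T where pb: "p = (b,T)" by (cases p)
    obtain b' T' where qb: "q = (b',T')" by (cases q)
    have h: "b \<in> {m..<n}" "T \<in> P" "b' \<in> {m..<n}" "T' \<in> P" using hp hq pb qb by auto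
    have eq: "insert b T = insert b' T'" using eq0 pb qb by simp
    have n1: "b \<notin> T" "b' \<notin> T'" "b \<notin> T'" using h unfolding P_def by auto
    have bb: "b = b'" using eq n1 by blast
    have "T = T'" using bb eq n1 by (metis Diff_insert_absorb)
    thus "p = q" using bb pb qb by simp
  qed
  have cF2: "card F2 = (n - m) * (m choose (s - 1))"
    unfolding F2_def using inj by (simp add: card_image card_cartesian_product P_def n_subsets)
  have cF1: "card F1 = m choose s" unfolding F1_def by (simp add: n_subsets)
  have finF: "finite F1" "finite F2" using F1C F2C finC by (auto intro: finite_subset)
  have "card (F1 \<union> F2) \<le> card C" using F1C F2C finC by (intro card_mono) auto
  thus ?thesis using card_Un_disjoint[OF finF disj] cF1 cF2 unfolding num_cliques_def C_def by simp
qed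

lemma H_upper:
  assumes m: "m \<ge> 1" and s: "s \<ge> 2"
  shows "num_cliques {0..<t*m+1} (K1_join_tK_edge m) s \<le> t * (Suc m choose s)"
proof -
  define C where "C = {S. S \<subseteq> {0..<t*m+1} \<and> card S = s \<and> (\<forall>x\<in>S. \<forall>y\<in>S. x \<noteq> y \<longrightarrow> K1_join_tK_edge m x y)}"
  define B where "B = (\<lambda>i. {S. S \<subseteq> insert 0 {i*m+1..<i*m+m+1} \<and> card S = s})"
  have sub: "C \<subseteq> (\<Union>i<t. B i)"
  proof
    fix S assume S: "S \<in> C"
    hence cS: "card S = s" and SV: "S \<subseteq> {0..<t*m+1}" unfolding C_def by auto
    have "\<exists>y\<in>S. y \<noteq> 0"
    proof (rule ccontr)
      assume "\<not> ?thesis" hence "S \<subseteq> {0}" by auto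
      hence "card S \<le> card {0::nat}" by (intro card_mono) auto
      thus False using cS s by simp
    qed
    then obtain y where y: "y \<in> S" "y \<noteq> 0" by blast
    define i where "i = (y - 1) div m"
    have "y - 1 < t * m" using y SV by auto
    hence it: "i < t" unfolding i_def using m
      by (simp add: div_less_iff_less_mult mult.commute)
    have "S \<subseteq> insert 0 {i*m+1..<i*m+m+1}"
    proof
      fix x assume x: "x \<in> S"
      show "x \<in> insert 0 {i*m+1..<i*m+m+1}"
      proof (cases "x = 0")
        case False
        have "(x - 1) div m = i"
        proof (cases "x = y")
          case True thus ?thesis by (simp add: i_def)
        next
          case xy: False
          hence "K1_join_tK_edge m x y" using S x y unfolding C_def by auto
          thus ?thesis using False y xy unfolding K1_join_tK_edge_def i_def by auto
        qed
        have xe1: "x - 1 = i * m + (x - 1) mod m"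
          using div_mult_mod_eq[of "x - 1" m] \<open>(x - 1) div m = i\<close> by metis
        have xe2: "(x - 1) mod m < m" using m by simp
        note xe = xe1 xe2
        have "i * m \<le> x - 1" using xe(1) by linarith
        moreover have "x - 1 < i * m + m" using xe by linarith
        ultimately show ?thesis using False by auto
      qed simp
    qed
    thus "S \<in> (\<Union>i<t. B i)" using it cS unfolding B_def by auto
  qed
  have fin: "finite (B i)" for i unfolding B_def
    by (rule finite_subset[of _ "Pow (insert 0 {i*m+1..<i*m+m+1})"]) auto
  have cB: "\<And>i. card (B i) = Suc m choose s"
  proof -
    fix i
    have "card (insert 0 {i*m+1..<i*m+m+1}) = Suc m" by simp
    thus "card (B i) = Suc m choose s" unfolding B_def by (simp add: n_subsets del: card_insert_disjoint)
  qed
  have "card C \<le> card (\<Union>i<t. B i)" using sub fin by (intro card_mono) auto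
  also have "\<dots> \<le> (\<Sum>i<t. card (B i))" by (rule card_UN_le) simp
  also have "\<dots> = t * (Suc m choose s)" using cB by simp
  finally show ?thesis unfolding num_cliques_def C_def .
qed

lemma arith_key:
  assumes m: "m \<ge> 1" and s: "s \<ge> 2" and t: "t \<ge> 1"
  shows "t * (Suc m choose s) \<le> (m choose s) + ((t - 1) * m + 1) * (m choose (s - 1))"
proof -
  obtain k where k: "s = Suc k" using s by (cases s) auto
  have e1: "Suc m choose s = (m choose s) + (m choose (s - 1))" using k by simp
  have "Suc m * (m choose k) = (Suc m choose Suc k) * Suc k" by (rule Suc_times_binomial_eq)
  hence "s * (Suc m choose s) = Suc m * (m choose (s-1))" using k by simp
  also have "\<dots> \<le> s * (m * (m choose (s - 1)))"
  proof -
    have "2 * m \<le> s * m" using s by simp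
    hence "Suc m \<le> s * m" using m by linarith
    thus ?thesis by (metis mult.assoc mult_le_mono1)
  qed
  finally have "Suc m choose s \<le> m * (m choose (s - 1))" using s by simp
  hence "(t - 1) * (Suc m choose s) \<le> (t - 1) * (m * (m choose (s - 1)))" by simp
  hence "t * (Suc m choose s) \<le> (t-1) * m * (m choose (s-1)) + (Suc m choose s)"
    using t by (cases t) (auto simp: algebra_simps)
  thus ?thesis using e1 by (simp add: algebra_simps)
qed

theorem claim4p2:
  fixes l t s :: nat and F :: "nat list"
  assumes "l \<ge> 2"
    and "(F = [l, l] \<and> even l) \<or> F = [l + 1, l] \<or> (F = [l + 2, l] \<and> odd l)
         \<or> (F = [l, l, 2] \<and> odd l)"
    and "t \<ge> 1"
    and "1 \<le> s" and "s \<le> delta_F F + 1"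
  shows "num_cliques (GF_vertices (t * (l - 1) + 1)) (GF_edge F) s
         \<ge> num_cliques {0..<t * (l - 1) + 1} (K1_join_tK_edge (l - 1)) s"
proof -
  define m where "m = l - 1"
  have m1: "m \<ge> 1" using assms(1) unfolding m_def by simp
  have dF: "delta_F F = m"
    using assms(2) unfolding delta_F_def m_def
    by (elim disjE conjE) (auto elim!: evenE oddE)
  show ?thesis
  proof (cases "s = 1")
    case True
    show ?thesis unfolding True GF_vertices_def nc_one[OF finite_atLeastLessThan] by simp
  next
    case False
    hence s2: "s \<ge> 2" using assms(4) by simp
    have E: "\<And>x y. x \<noteq> y \<Longrightarrow> x < m \<or> y < m \<Longrightarrow> GF_edge F x y"
      unfolding GF_edge_def dF by auto
    have mn: "m \<le> t * m + 1" using mult_le_mono1[OF assms(3), of m] by linarith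
    have "num_cliques {0..<t * m + 1} (K1_join_tK_edge m) s \<le> t * (Suc m choose s)"
      by (rule H_upper[OF m1 s2])
    also have "\<dots> \<le> (m choose s) + ((t - 1) * m + 1) * (m choose (s - 1))"
      by (rule arith_key[OF m1 s2 assms(3)])
    also have "(t - 1) * m + 1 = t * m + 1 - m" using assms(3) by (cases t) auto
    also have "(m choose s) + (t * m + 1 - m) * (m choose (s - 1)) \<le> num_cliques {0..<t*m+1} (GF_edge F) s"
      by (rule G_lower[OF E mn assms(4)])
    finally show ?thesis unfolding GF_vertices_def m_def .
  qed
qed

end
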